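(* If $\otimes=\min$ and $\oplus$ is any uninorm on $[0,1]$, then $(\otimes,\oplus)$ satisfies the rearrangement inequality and the dual rearrangement inequality. If $\oplus=\max$ and $\otimes$ is any uninorm on $[0,1]$, then $(\otimes,\oplus)$ satisfies the rearrangement inequality and the dual rearrangement inequality.
   Context: A uninorm is a function $\otimes:[0,1]^2\to[0,1]$ that is commutative, associative, monotonic ($x\leq y$ implies $x\otimes z\leq y\otimes z$), and has an identity element $e\in[0,1]$ ($\min$ and $\max$ are uninorms). $(\otimes,\oplus)$ satisfies the rearrangement inequality if for every $n\geq1$, all $0\leq x_1\leq\cdots\leq x_n\leq 1$, $0\leq y_1\leq\cdots\leq y_n\leq 1$ and every permutation $\sigma$ of $\{1,\dots,n\}$, $$(x_n\otimes y_1)\oplus\cdots\oplus(x_1\otimes y_n)\leq (x_{\sigma(1)}\otimes y_1)\oplus\cdots\oplus(x_{\sigma(n)}\otimes y_n)\leq (x_1\otimes y_1)\oplus\cdots\oplus(x_n\otimes y_n),$$ and the dual rearrangement inequality if for all such data $$(x_n\oplus y_1)\otimes\cdots\otimes(x_1\oplus y_n)\geq (x_{\sigma(1)}\oplus y_1)\otimes\cdots\otimes(x_{\sigma(n)}\oplus y_n)\geq (x_1\oplus y_1)\otimes\cdots\otimes(x_n\oplus y_n).$$ *)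

theory Defs
  imports Complex_Main "HOL-Combinatorics.Permutations"
begin

definition uninorm :: "(real \<Rightarrow> real \<Rightarrow> real) \<Rightarrow> bool" where
  "uninorm U \<longleftrightarrow>
     (\<forall>x\<in>{0..1}. \<forall>y\<in>{0..1}. U x y \<in> {0..1}) \<and>
     (\<forall>x\<in>{0..1}. \<forall>y\<in>{0..1}. U x y = U y x) \<and>
     (\<forall>x\<in>{0..1}. \<forall>y\<in>{0..1}. \<forall>z\<in>{0..1}. U (U x y) z = U x (U y z)) \<and>
     (\<forall>x\<in>{0..1}. \<forall>y\<in>{0..1}. \<forall>z\<in>{0..1}. x \<le> y \<longrightarrow> U x z \<le> U y z) \<and>
     (\<exists>e\<in>{0..1}. \<forall>x\<in>{0..1}. U e x = x)"

text \<open>Iterated operation  a 0 \<otimes> a 1 \<otimes> ... \<otimes> a (n-1)  (left-nested), for n \<ge> 1.\<close>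
definition agg :: "(real \<Rightarrow> real \<Rightarrow> real) \<Rightarrow> (nat \<Rightarrow> real) \<Rightarrow> nat \<Rightarrow> real" where
  "agg U a n = foldl U (a 0) (map a [1..<n])"

text \<open>Rearrangement inequality, with indices shifted to 0..n-1.\<close>
definition rearrangement_ineq ::
  "(real \<Rightarrow> real \<Rightarrow> real) \<Rightarrow> (real \<Rightarrow> real \<Rightarrow> real) \<Rightarrow> bool" where
  "rearrangement_ineq T S \<longleftrightarrow>
    (\<forall>n::nat. \<forall>x y :: nat \<Rightarrow> real. \<forall>\<sigma>.
       n \<ge> 1 \<longrightarrow>
       (\<forall>i<n. 0 \<le> x i \<and> x i \<le> 1 \<and> 0 \<le> y i \<and> y i \<le> 1) \<longrightarrow>
       (\<forall>i j. i \<le> j \<longrightarrow> j < n \<longrightarrow> x i \<le> x j \<and> y i \<le> y j) \<longrightarrow>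
       \<sigma> permutes {..<n} \<longrightarrow>
       agg S (\<lambda>i. T (x (n - 1 - i)) (y i)) n \<le> agg S (\<lambda>i. T (x (\<sigma> i)) (y i)) n \<and>
       agg S (\<lambda>i. T (x (\<sigma> i)) (y i)) n \<le> agg S (\<lambda>i. T (x i) (y i)) n)"

definition dual_rearrangement_ineq ::
  "(real \<Rightarrow> real \<Rightarrow> real) \<Rightarrow> (real \<Rightarrow> real \<Rightarrow> real) \<Rightarrow> bool" where
  "dual_rearrangement_ineq T S \<longleftrightarrow>
    (\<forall>n::nat. \<forall>x y :: nat \<Rightarrow> real. \<forall>\<sigma>.
       n \<ge> 1 \<longrightarrow>
       (\<forall>i<n. 0 \<le> x i \<and> x i \<le> 1 \<and> 0 \<le> y i \<and> y i \<le> 1) \<longrightarrow>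
       (\<forall>i j. i \<le> j \<longrightarrow> j < n \<longrightarrow> x i \<le> x j \<and> y i \<le> y j) \<longrightarrow>
       \<sigma> permutes {..<n} \<longrightarrow>
       agg T (\<lambda>i. S (x (n - 1 - i)) (y i)) n \<ge> agg T (\<lambda>i. S (x (\<sigma> i)) (y i)) n \<and>
       agg T (\<lambda>i. S (x (\<sigma> i)) (y i)) n \<ge> agg T (\<lambda>i. S (x i) (y i)) n)"

end

theory Submission
  imports Defs
begin

lemma agg_1: "agg U a (Suc 0) = a 0"
  by (simp add: agg_def)

lemma agg_Suc: "m \<ge> 1 \<Longrightarrow> agg U a (Suc m) = U (agg U a m) (a m)"
  by (simp add: agg_def)

lemma agg_cong: "m \<ge> 1 \<Longrightarrow> (\<And>i. i < m \<Longrightarrow> a i = b i) \<Longrightarrow> agg U a m = agg U b m"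
  unfolding agg_def by (auto intro!: arg_cong2[where f="foldl U"] map_cong)

lemma uni_closed: "uninorm U \<Longrightarrow> x \<in> {0..1} \<Longrightarrow> y \<in> {0..1} \<Longrightarrow> U x y \<in> {0..1}"
  unfolding uninorm_def by blast
lemma uni_comm: "uninorm U \<Longrightarrow> x \<in> {0..1} \<Longrightarrow> y \<in> {0..1} \<Longrightarrow> U x y = U y x"
  unfolding uninorm_def by blast
lemma uni_assoc: "uninorm U \<Longrightarrow> x \<in> {0..1} \<Longrightarrow> y \<in> {0..1} \<Longrightarrow> z \<in> {0..1} \<Longrightarrow> U (U x y) z = U x (U y z)"
  unfolding uninorm_def by blast
lemma uni_mono: "uninorm U \<Longrightarrow> x \<in> {0..1} \<Longrightarrow> y \<in> {0..1} \<Longrightarrow> z \<in> {0..1} \<Longrightarrow> x \<le> y \<Longrightarrow> U x z \<le> U y z"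
  unfolding uninorm_def by blast
lemma uni_mono2: "uninorm U \<Longrightarrow> x \<in> {0..1} \<Longrightarrow> y \<in> {0..1} \<Longrightarrow> z \<in> {0..1} \<Longrightarrow> x \<le> y \<Longrightarrow> U z x \<le> U z y"
  using uni_mono uni_comm by metis
lemma uni_id: "uninorm U \<Longrightarrow> \<exists>e\<in>{0..1}. \<forall>x\<in>{0..1}. U e x = x \<and> U x e = x"
  unfolding uninorm_def by (metis (no_types, lifting))

lemma agg_closed: "uninorm U \<Longrightarrow> m \<ge> 1 \<Longrightarrow> (\<And>i. i < m \<Longrightarrow> a i \<in> {0..1}) \<Longrightarrow> agg U a m \<in> {0..1}"
proof (induction m)
  case 0 then show ?case by simp
next
  case (Suc m)
  show ?case
  proof (cases "m = 0")
    case True then show ?thesis using Suc by (simp add: agg_1)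
  next
    case False
    then have "agg U a m \<in> {0..1}" using Suc by simp
    moreover have "a m \<in> {0..1}" using Suc by simp
    ultimately show ?thesis using False uni_closed[OF Suc.prems(1)] by (simp add: agg_Suc)
  qed
qed

lemma agg_extract:
  assumes U: "uninorm U" and e: "e \<in> {0..1}" "\<forall>x\<in>{0..1}. U e x = x \<and> U x e = x"
    and r: "\<And>i. i < m \<Longrightarrow> a i \<in> {0..1}" and k: "k < m"
  shows "agg U a m = U (agg U (a(k:=e)) m) (a k)"
  using r k
proof (induction m)
  case 0 then show ?case by simp
next
  case (Suc m)
  show ?case
  proof (cases "m = 0")
    case True
    then have "k = 0" using Suc by simp
    then show ?thesis using True Suc.prems e by (simp add: agg_1)
  next
    case False
    then have m1: "m \<ge> 1" by simp
    have rc: "\<And>i. i < m \<Longrightarrow> (a(k:=e)) i \<in> {0..1}" using Suc.prems e by auto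
    show ?thesis
    proof (cases "k = m")
      case True
      have "agg U (a(k:=e)) m = agg U a m" using True m1 by (intro agg_cong) auto
      moreover have "agg U a m \<in> {0..1}" using agg_closed[OF U m1] Suc.prems by auto
      moreover have "agg U (a(k:=e)) (Suc m) = U (agg U (a(k:=e)) m) e"
        using m1 True by (simp add: agg_Suc)
      ultimately have "agg U (a(k:=e)) (Suc m) = agg U a m" using e by simp
      moreover have "agg U a (Suc m) = U (agg U a m) (a m)" using m1 by (rule agg_Suc)
      ultimately show ?thesis unfolding True by (simp only:)
    next
      case False
      then have km: "k < m" using Suc.prems by simp
      have IH: "agg U a m = U (agg U (a(k:=e)) m) (a k)" by (rule Suc.IH) (use Suc.prems km in auto)
      have c: "agg U (a(k:=e)) m \<in> {0..1}" using agg_closed[OF U m1 rc] .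
      have ak: "a k \<in> {0..1}" "a m \<in> {0..1}" using Suc.prems km by auto
      have "agg U a (Suc m) = U (U (agg U (a(k:=e)) m) (a k)) (a m)" using IH m1 by (simp add: agg_Suc)
      also have "\<dots> = U (agg U (a(k:=e)) m) (U (a k) (a m))" using uni_assoc[OF U c ak] .
      also have "\<dots> = U (agg U (a(k:=e)) m) (U (a m) (a k))" using uni_comm[OF U ak] by simp
      also have "\<dots> = U (U (agg U (a(k:=e)) m) (a m)) (a k)" using uni_assoc[OF U c ak(2,1)] by simp
      also have "\<dots> = U (agg U (a(k:=e)) (Suc m)) (a k)" using m1 False by (simp add: agg_Suc)
      finally show ?thesis .
    qed
  qed
qed

lemma agg_swap2:
  assumes U: "uninorm U"
    and mono: "\<And>a b c. a \<in> {0..1} \<Longrightarrow> b \<in> {0..1} \<Longrightarrow> c \<in> {0..1} \<Longrightarrow> le a b \<Longrightarrow> le (U a c) (U b c)"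
    and ra: "\<And>i. i \<le> m \<Longrightarrow> a i \<in> {0..1}" and rb: "\<And>i. i \<le> m \<Longrightarrow> b i \<in> {0..1}"
    and k: "k < m" and eq: "\<And>i. i < m \<Longrightarrow> i \<noteq> k \<Longrightarrow> a i = b i"
    and p: "le (U (a k) (a m)) (U (b k) (b m))"
  shows "le (agg U a (Suc m)) (agg U b (Suc m))"
proof -
  obtain e where e: "e \<in> {0..1}" "\<forall>x\<in>{0..1}. U e x = x \<and> U x e = x" using uni_id[OF U] by blast
  have m1: "m \<ge> 1" using k by simp
  have cc: "agg U (a(k:=e)) m = agg U (b(k:=e)) m" using m1 eq by (intro agg_cong) auto
  have rc: "\<And>i. i < m \<Longrightarrow> (a(k:=e)) i \<in> {0..1}" using ra e by auto
  have c: "agg U (a(k:=e)) m \<in> {0..1}" using agg_closed[OF U m1 rc] .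
  have ak: "a k \<in> {0..1}" "a m \<in> {0..1}" "b k \<in> {0..1}" "b m \<in> {0..1}" using ra rb k by auto
  have A: "agg U a (Suc m) = U (agg U (a(k:=e)) m) (U (a k) (a m))"
    using agg_Suc[OF m1, of U a] agg_extract[OF U e, of m a k] ra k uni_assoc[OF U c ak(1,2)] by simp
  have cb: "agg U (b(k:=e)) m \<in> {0..1}" using c cc by simp
  have B: "agg U b (Suc m) = U (agg U (a(k:=e)) m) (U (b k) (b m))"
    using agg_Suc[OF m1, of U b] agg_extract[OF U e, of m b k] rb k uni_assoc[OF U cb ak(3,4)] cc by simp
  have p1: "U (a k) (a m) \<in> {0..1}" "U (b k) (b m) \<in> {0..1}" using uni_closed[OF U] ak by auto
  have "le (U (U (a k) (a m)) (agg U (a(k:=e)) m)) (U (U (b k) (b m)) (agg U (a(k:=e)) m))"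
    using mono[OF p1 c p] .
  then show ?thesis unfolding A B using uni_comm[OF U] p1 c by metis
qed

lemma gen:
  fixes U :: "real \<Rightarrow> real \<Rightarrow> real" and t :: "nat \<Rightarrow> nat \<Rightarrow> real" and le
  assumes U: "uninorm U"
    and refl: "\<And>a. le a a" and trans: "\<And>a b c. le a b \<Longrightarrow> le b c \<Longrightarrow> le a c"
    and mono: "\<And>a b c. a \<in> {0..1} \<Longrightarrow> b \<in> {0..1} \<Longrightarrow> c \<in> {0..1} \<Longrightarrow> le a b \<Longrightarrow> le (U a c) (U b c)"
    and rng: "\<And>i j. i < n \<Longrightarrow> j < n \<Longrightarrow> t i j \<in> {0..1}"
    and pair: "\<And>i i' j j'. i \<le> i' \<Longrightarrow> i' < n \<Longrightarrow> j \<le> j' \<Longrightarrow> j' < n \<Longrightarrow>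
        le (U (t i j') (t i' j)) (U (t i j) (t i' j'))"
    and n: "n \<ge> 1" and bij: "bij_betw \<sigma> {..<n} {..<n}"
  shows "le (agg U (\<lambda>i. t i (\<sigma> i)) n) (agg U (\<lambda>i. t i i) n)"
proof -
  have "\<forall>\<sigma>. m \<le> n \<longrightarrow> m \<ge> 1 \<longrightarrow> bij_betw \<sigma> {..<m} {..<m} \<longrightarrow>
      le (agg U (\<lambda>i. t i (\<sigma> i)) m) (agg U (\<lambda>i. t i i) m)" for m
  proof (induction m)
    case 0 then show ?case by simp
  next
    case (Suc m)
    show ?case
    proof (intro allI impI)
      fix \<sigma> :: "nat \<Rightarrow> nat"
      assume mn: "Suc m \<le> n" and m1': "1 \<le> Suc m" and bs: "bij_betw \<sigma> {..<Suc m} {..<Suc m}"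
      have sr: "\<And>i. i < Suc m \<Longrightarrow> \<sigma> i < Suc m" using bs by (auto simp: bij_betw_def)
      show "le (agg U (\<lambda>i. t i (\<sigma> i)) (Suc m)) (agg U (\<lambda>i. t i i) (Suc m))"
      proof (cases "m = 0")
        case True
        then have "\<sigma> 0 = 0" using sr by fastforce
        then show ?thesis using True by (simp add: agg_1 refl)
      next
        case False
        then have m1: "m \<ge> 1" by simp
        have IH: "\<And>\<tau>. bij_betw \<tau> {..<m} {..<m} \<Longrightarrow> le (agg U (\<lambda>i. t i (\<tau> i)) m) (agg U (\<lambda>i. t i i) m)"
          using Suc.IH mn m1 by simp
        have fin: "\<And>\<tau>. bij_betw \<tau> {..<Suc m} {..<Suc m} \<Longrightarrow> \<tau> m = m \<Longrightarrow>
            le (agg U (\<lambda>i. t i (\<tau> i)) (Suc m)) (agg U (\<lambda>i. t i i) (Suc m))"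
        proof -
          fix \<tau> :: "nat \<Rightarrow> nat"
          assume bt: "bij_betw \<tau> {..<Suc m} {..<Suc m}" and tm: "\<tau> m = m"
          have "bij_betw \<tau> ({..<Suc m} - {m}) ({..<Suc m} - {m})"
            by (rule bij_betw_DiffI[OF bt]) (use tm in auto)
          moreover have "{..<Suc m} - {m} = {..<m}" by auto
          ultimately have bt': "bij_betw \<tau> {..<m} {..<m}" by simp
          have tr: "\<And>i. i < m \<Longrightarrow> \<tau> i < m" using bt' by (auto simp: bij_betw_def)
          have c1: "agg U (\<lambda>i. t i (\<tau> i)) m \<in> {0..1}"
            by (rule agg_closed[OF U m1]) (use rng[of _ "\<tau> _"] tr mn in \<open>fastforce\<close>)
          have c2: "agg U (\<lambda>i. t i i) m \<in> {0..1}"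
            by (rule agg_closed[OF U m1]) (use rng mn in simp)
          have c3: "t m m \<in> {0..1}" using rng mn by simp
          show "le (agg U (\<lambda>i. t i (\<tau> i)) (Suc m)) (agg U (\<lambda>i. t i i) (Suc m))"
            using mono[OF c1 c2 c3 IH[OF bt']] tm m1 by (simp add: agg_Suc)
        qed
        define k where "k = inv_into {..<Suc m} \<sigma> m"
        have kk: "k < Suc m" "\<sigma> k = m" unfolding k_def
          using bs by (auto simp: bij_betw_def intro!: inv_into_into[of m \<sigma>, simplified] f_inv_into_f)
        show ?thesis
        proof (cases "k = m")
          case True then show ?thesis using fin bs kk by simp
        next
          case False
          with kk have km: "k < m" by simp
          define \<tau> where "\<tau> = \<sigma> \<circ> transpose k m"
          have bt: "bij_betw \<tau> {..<Suc m} {..<Suc m}" unfolding \<tau>_def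
            by (rule bij_betw_trans[OF _ bs]) (use km in simp)
          have tm: "\<tau> m = m" "\<tau> k = \<sigma> m" using kk by (simp_all add: \<tau>_def)
          have teq: "\<And>i. i \<noteq> k \<Longrightarrow> i \<noteq> m \<Longrightarrow> \<tau> i = \<sigma> i" by (simp add: \<tau>_def)
          have "le (agg U (\<lambda>i. t i (\<sigma> i)) (Suc m)) (agg U (\<lambda>i. t i (\<tau> i)) (Suc m))"
          proof (rule agg_swap2[where le=le, OF U mono])
            show "\<And>i. i \<le> m \<Longrightarrow> t i (\<sigma> i) \<in> {0..1}"
            proof -
              fix i assume "i \<le> m"
              then have "i < n" "\<sigma> i < n" using sr[of i] mn by auto
              then show "t i (\<sigma> i) \<in> {0..1}" by (rule rng)
            qed
            show "\<And>i. i \<le> m \<Longrightarrow> t i (\<tau> i) \<in> {0..1}" using rng bt mn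
              by (simp add: bij_betw_def) (metis image_eqI le_imp_less_Suc lessThan_iff order_less_le_trans)
            show "k < m" by (rule km)
            show "\<And>i. i < m \<Longrightarrow> i \<noteq> k \<Longrightarrow> t i (\<sigma> i) = t i (\<tau> i)" using teq by simp
            have "\<sigma> m \<le> m" using sr by (simp add: less_Suc_eq_le)
            then show "le (U (t k (\<sigma> k)) (t m (\<sigma> m))) (U (t k (\<tau> k)) (t m (\<tau> m)))"
              using pair[of k m "\<sigma> m" m] km mn kk tm by simp
          qed
          then show ?thesis using fin[OF bt tm(1)] trans by blast
        qed
      qed
    qed
  qed
  then show ?thesis using n bij by simp
qed

lemma rev_bij: "bij_betw (\<lambda>j. n - 1 - j) {..<n} {..<(n::nat)}"
  by (rule bij_betw_byWitness[where f'="\<lambda>j. n - 1 - j"]) auto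

lemma main:
  fixes U F :: "real \<Rightarrow> real \<Rightarrow> real" and le
  assumes U: "uninorm U"
    and refl: "\<And>a. le a a" and trans: "\<And>a b c. le a b \<Longrightarrow> le b c \<Longrightarrow> le a c"
    and mono: "\<And>a b c. a \<in> {0..1} \<Longrightarrow> b \<in> {0..1} \<Longrightarrow> c \<in> {0..1} \<Longrightarrow> le a b \<Longrightarrow> le (U a c) (U b c)"
    and monor: "\<And>a b c. a \<in> {0..1} \<Longrightarrow> b \<in> {0..1} \<Longrightarrow> c \<in> {0..1} \<Longrightarrow> le b a \<Longrightarrow> le (U b c) (U a c)"
    and Fr: "\<And>a b. a \<in> {0..1} \<Longrightarrow> b \<in> {0..1} \<Longrightarrow> F a b \<in> {0..1}"
    and pairF: "\<And>A B y Y. A \<in> {0..1} \<Longrightarrow> B \<in> {0..1} \<Longrightarrow> y \<in> {0..1} \<Longrightarrow> Y \<in> {0..1} \<Longrightarrow>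
        B \<le> A \<Longrightarrow> y \<le> Y \<Longrightarrow> le (U (F A y) (F B Y)) (U (F B y) (F A Y))"
    and n: "n \<ge> 1"
    and r: "\<forall>i<n. 0 \<le> x i \<and> x i \<le> 1 \<and> 0 \<le> y i \<and> y i \<le> 1"
    and mo: "\<forall>i j. i \<le> j \<longrightarrow> j < n \<longrightarrow> x i \<le> x j \<and> y i \<le> y j"
    and p: "\<sigma> permutes {..<n}"
  shows "le (agg U (\<lambda>i. F (x (n - 1 - i)) (y i)) n) (agg U (\<lambda>i. F (x (\<sigma> i)) (y i)) n) \<and>
         le (agg U (\<lambda>i. F (x (\<sigma> i)) (y i)) n) (agg U (\<lambda>i. F (x i) (y i)) n)"
proof
  have bs: "bij_betw \<sigma> {..<n} {..<n}" using permutes_imp_bij[OF p] .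
  have sr: "\<And>i. i < n \<Longrightarrow> \<sigma> i < n" using bs by (auto simp: bij_betw_def)
  show "le (agg U (\<lambda>i. F (x (\<sigma> i)) (y i)) n) (agg U (\<lambda>i. F (x i) (y i)) n)"
  proof (rule gen[where t="\<lambda>i j. F (x j) (y i)" and le=le and U=U and n=n and \<sigma>=\<sigma>, OF U refl trans mono _ _ n bs])
    show "\<And>i j. i < n \<Longrightarrow> j < n \<Longrightarrow> F (x j) (y i) \<in> {0..1}" using Fr r by simp
    show "\<And>i i' j j'. i \<le> i' \<Longrightarrow> i' < n \<Longrightarrow> j \<le> j' \<Longrightarrow> j' < n \<Longrightarrow>
        le (U (F (x j') (y i)) (F (x j) (y i'))) (U (F (x j) (y i)) (F (x j') (y i')))"
      using pairF r mo by simp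
  qed
  let ?le = "\<lambda>a b. le b a"
  have bt: "bij_betw (\<lambda>i. n - 1 - \<sigma> i) {..<n} {..<n}"
    using bij_betw_trans[OF bs rev_bij[of n]] by (simp add: comp_def)
  have "?le (agg U (\<lambda>i. F (x (n - 1 - (n - 1 - \<sigma> i))) (y i)) n) (agg U (\<lambda>i. F (x (n - 1 - i)) (y i)) n)"
  proof (rule gen[where t="\<lambda>i j. F (x (n - 1 - j)) (y i)" and le="?le" and U=U and n=n, OF U refl _ monor _ _ n bt])
    show "\<And>a b c. le b a \<Longrightarrow> le c b \<Longrightarrow> le c a" using trans by blast
    show "\<And>i j. i < n \<Longrightarrow> j < n \<Longrightarrow> F (x (n - 1 - j)) (y i) \<in> {0..1}" using Fr r by simp
    show "\<And>i i' j j'. i \<le> i' \<Longrightarrow> i' < n \<Longrightarrow> j \<le> j' \<Longrightarrow> j' < n \<Longrightarrow>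
        le (U (F (x (n - 1 - j)) (y i)) (F (x (n - 1 - j')) (y i'))) (U (F (x (n - 1 - j')) (y i)) (F (x (n - 1 - j)) (y i')))"
      using pairF r mo by simp
  qed
  moreover have "agg U (\<lambda>i. F (x (n - 1 - (n - 1 - \<sigma> i))) (y i)) n = agg U (\<lambda>i. F (x (\<sigma> i)) (y i)) n"
  proof (rule agg_cong[OF n])
    fix i assume "i < n"
    then have "\<sigma> i < n" by (rule sr)
    then have "n - 1 - (n - 1 - \<sigma> i) = \<sigma> i" by arith
    then show "F (x (n - 1 - (n - 1 - \<sigma> i))) (y i) = F (x (\<sigma> i)) (y i)" by simp
  qed
  ultimately show "le (agg U (\<lambda>i. F (x (n - 1 - i)) (y i)) n) (agg U (\<lambda>i. F (x (\<sigma> i)) (y i)) n)" by simp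
qed

lemma uninorm_min: "uninorm min"
  unfolding uninorm_def by (auto intro!: bexI[of _ 1])

lemma uninorm_max: "uninorm max"
  unfolding uninorm_def by (auto intro!: bexI[of _ 0])

lemma P1:
  assumes U: "uninorm U" and r: "A \<in> {0..1}" "B \<in> {0..1}" "y \<in> {0..1}" "Y \<in> {0..1}"
    and o: "B \<le> A" "y \<le> Y"
  shows "U (min A y) (min B Y) \<le> U (min B y) (min A Y)"
proof (cases "B \<le> y")
  case True
  then have "min B y = B" "min B Y = B" using o by auto
  moreover have "U (min A y) B \<le> U (min A Y) B" using uni_mono[OF U _ _ r(2)] r o
    by (auto simp: min_def)
  ultimately show ?thesis using uni_comm[OF U] r by (metis min_def)
next
  case False
  then have "min B y = y" "min A y = y" using o by auto
  moreover have "U y (min B Y) \<le> U y (min A Y)" using uni_mono2[OF U _ _ r(3)] r o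
    by (auto simp: min_def)
  ultimately show ?thesis by simp
qed

lemma P4:
  assumes U: "uninorm U" and r: "A \<in> {0..1}" "B \<in> {0..1}" "y \<in> {0..1}" "Y \<in> {0..1}"
    and o: "B \<le> A" "y \<le> Y"
  shows "U (max B y) (max A Y) \<le> U (max A y) (max B Y)"
proof (cases "Y \<le> A")
  case True
  then have "max A Y = A" "max A y = A" using o by auto
  moreover have "U (max B y) A \<le> U (max B Y) A" using uni_mono[OF U _ _ r(1)] r o
    by (auto simp: max_def)
  ultimately show ?thesis using uni_comm[OF U] r by (metis max_def)
next
  case False
  then have "max A Y = Y" "max B Y = Y" using o by auto
  moreover have "U (max B y) Y \<le> U (max A y) Y" using uni_mono[OF U _ _ r(4)] r o
    by (auto simp: max_def)
  ultimately show ?thesis by simp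
qed

lemma pairS:
  assumes S: "uninorm S" and r: "A \<in> {0..1}" "B \<in> {0..1}" "y \<in> {0..1}" "Y \<in> {0..1}"
    and o: "B \<le> A" "y \<le> Y"
  shows "min (S B y) (S A Y) \<le> min (S A y) (S B Y)"
proof -
  have "S B y \<le> S A y" using uni_mono[OF S r(2,1,3) o(1)] .
  moreover have "S B y \<le> S B Y" using uni_mono2[OF S r(3,4,2) o(2)] .
  ultimately show ?thesis by linarith
qed

lemma pairT:
  assumes T: "uninorm T" and r: "A \<in> {0..1}" "B \<in> {0..1}" "y \<in> {0..1}" "Y \<in> {0..1}"
    and o: "B \<le> A" "y \<le> Y"
  shows "max (T A y) (T B Y) \<le> max (T B y) (T A Y)"
proof -
  have "T A y \<le> T A Y" using uni_mono2[OF T r(3,4,1) o(2)] .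
  moreover have "T B Y \<le> T A Y" using uni_mono[OF T r(2,1,4) o(1)] .
  ultimately show ?thesis by linarith
qed

lemma min_mono01: "min (a::real) c \<le> min b c" if "a \<le> b" using that by (simp add: min_def)
lemma max_mono01: "max (a::real) c \<le> max b c" if "a \<le> b" using that by (simp add: max_def)
lemma min01: "a \<in> {0..1} \<Longrightarrow> b \<in> {0..1} \<Longrightarrow> min (a::real) b \<in> {0..1}" by (simp add: min_def)
lemma max01: "a \<in> {0..1} \<Longrightarrow> b \<in> {0..1} \<Longrightarrow> max (a::real) b \<in> {0..1}" by (simp add: max_def)

lemma r1: assumes S: "uninorm S" shows "rearrangement_ineq min S"
  unfolding rearrangement_ineq_def
proof (intro allI impI)
    fix n and x y :: "nat \<Rightarrow> real" and \<sigma> assume h: "1 \<le> (n::nat)" "\<forall>i<n. 0 \<le> x i \<and> x i \<le> (1::real) \<and> 0 \<le> y i \<and> y i \<le> 1"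
      "\<forall>i j. i \<le> j \<longrightarrow> j < n \<longrightarrow> x i \<le> x j \<and> y i \<le> y j" "\<sigma> permutes {..<n}"
  show "agg S (\<lambda>i. min (x (n - 1 - i)) (y i)) n \<le> agg S (\<lambda>i. min (x (\<sigma> i)) (y i)) n \<and>
       agg S (\<lambda>i. min (x (\<sigma> i)) (y i)) n \<le> agg S (\<lambda>i. min (x i) (y i)) n"
    by (rule main[where le="(\<le>)" and U=S and F=min, OF S _ _ uni_mono[OF S] uni_mono[OF S] min01 P1[OF S] h]) auto
qed

lemma d1: assumes S: "uninorm S" shows "dual_rearrangement_ineq min S"
  unfolding dual_rearrangement_ineq_def
proof (intro allI impI)
    fix n and x y :: "nat \<Rightarrow> real" and \<sigma> assume h: "1 \<le> (n::nat)" "\<forall>i<n. 0 \<le> x i \<and> x i \<le> (1::real) \<and> 0 \<le> y i \<and> y i \<le> 1"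
      "\<forall>i j. i \<le> j \<longrightarrow> j < n \<longrightarrow> x i \<le> x j \<and> y i \<le> y j" "\<sigma> permutes {..<n}"
  show "agg min (\<lambda>i. S (x (n - 1 - i)) (y i)) n \<ge> agg min (\<lambda>i. S (x (\<sigma> i)) (y i)) n \<and>
       agg min (\<lambda>i. S (x (\<sigma> i)) (y i)) n \<ge> agg min (\<lambda>i. S (x i) (y i)) n"
    by (rule main[where le="\<lambda>a b. b \<le> a" and U=min and F=S, OF uninorm_min _ _ min_mono01 min_mono01 uni_closed[OF S] pairS[OF S] h]) auto
qed

lemma r2: assumes T: "uninorm T" shows "rearrangement_ineq T max"
  unfolding rearrangement_ineq_def
proof (intro allI impI)
    fix n and x y :: "nat \<Rightarrow> real" and \<sigma> assume h: "1 \<le> (n::nat)" "\<forall>i<n. 0 \<le> x i \<and> x i \<le> (1::real) \<and> 0 \<le> y i \<and> y i \<le> 1"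
      "\<forall>i j. i \<le> j \<longrightarrow> j < n \<longrightarrow> x i \<le> x j \<and> y i \<le> y j" "\<sigma> permutes {..<n}"
  show "agg max (\<lambda>i. T (x (n - 1 - i)) (y i)) n \<le> agg max (\<lambda>i. T (x (\<sigma> i)) (y i)) n \<and>
       agg max (\<lambda>i. T (x (\<sigma> i)) (y i)) n \<le> agg max (\<lambda>i. T (x i) (y i)) n"
    by (rule main[where le="(\<le>)" and U=max and F=T, OF uninorm_max _ _ max_mono01 max_mono01 uni_closed[OF T] pairT[OF T] h]) auto
qed

lemma d2: assumes T: "uninorm T" shows "dual_rearrangement_ineq T max"
  unfolding dual_rearrangement_ineq_def
proof (intro allI impI)
    fix n and x y :: "nat \<Rightarrow> real" and \<sigma> assume h: "1 \<le> (n::nat)" "\<forall>i<n. 0 \<le> x i \<and> x i \<le> (1::real) \<and> 0 \<le> y i \<and> y i \<le> 1"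
      "\<forall>i j. i \<le> j \<longrightarrow> j < n \<longrightarrow> x i \<le> x j \<and> y i \<le> y j" "\<sigma> permutes {..<n}"
  show "agg T (\<lambda>i. max (x (n - 1 - i)) (y i)) n \<ge> agg T (\<lambda>i. max (x (\<sigma> i)) (y i)) n \<and>
       agg T (\<lambda>i. max (x (\<sigma> i)) (y i)) n \<ge> agg T (\<lambda>i. max (x i) (y i)) n"
    by (rule main[where le="\<lambda>a b. b \<le> a" and U=T and F=max, OF T _ _ uni_mono[OF T] uni_mono[OF T] max01 P4[OF T] h]) auto
qed

theorem theorem10:
  shows "(\<forall>S. uninorm S \<longrightarrow>
            rearrangement_ineq min S \<and> dual_rearrangement_ineq min S) \<and>
         (\<forall>T. uninorm T \<longrightarrow>
            rearrangement_ineq T max \<and> dual_rearrangement_ineq T max)"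
  using r1 d1 r2 d2 by blast

end
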